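(* Let $\kappa\ge1$. For any polynomials $\varphi_1,\varphi_2\in\mathbb{C}[t]$, $T[\varphi_1\varphi_2]=T[\varphi_1]T[\varphi_2]$. Consequently $\widehat{\varphi_1\varphi_2}=\widehat{\varphi_1}\circledast_\kappa\widehat{\varphi_2}$.
   Context: $\mathrm{T}_\kappa=(V_\kappa,E_\kappa)$ is the Cayley tree of order $\kappa$ (infinite connected acyclic graph, every vertex of degree $\kappa+1$), $d$ its graph distance; operators on $\ell^2(V_\kappa)$ are identified with kernels $A(x,y)=\langle A\delta_y,\delta_x\rangle$. Cartier–Dunau polynomials: $P_0=1$, $P_1(t)=t$, $tP_n=\frac{\kappa}{\kappa+1}P_{n+1}+\frac1{\kappa+1}P_{n-1}$ ($n\ge1$). $d\Pi_\kappa(t)=\frac{\kappa+1}{2\pi}\frac{\sqrt{4\kappa(\kappa+1)^{-2}-t^2}}{1-t^2}\mathbf{1}_{[-2\sqrt\kappa/(\kappa+1),\,2\sqrt\kappa/(\kappa+1)]}(t)dt$. For $\varphi\in L^1(\Pi_\kappa)$, $\widehat\varphi(n)=\int P_n\varphi\,d\Pi_\kappa$ and $T[\varphi](x,y)=\widehat\varphi(d(x,y))$ (for polynomial $\varphi$ this is a bounded operator on $\ell^2(V_\kappa)$). For $\alpha_1,\alpha_2:\mathbb{N}_0\to\mathbb{C}$ whose kernels $\alpha_i(d(x,y))$ define bounded operators, fix $(v_n)_{n\ge0}$ in $V_\kappa$ with $d(v_k,v_n)=|k-n|$ and define $(\alpha_1\circledast_\kappa\alpha_2)(n)=\sum_{x\in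 V_\kappa}\alpha_1(d(v_0,x))\alpha_2(d(x,v_n))$. *)

theory Defs
  imports "HOL-Analysis.Analysis" "HOL-Computational_Algebra.Polynomial"
begin

text \<open>Concrete model of the Cayley tree of order kappa: vertices are reduced words
  over the alphabet {0..kappa} (no two consecutive letters equal); x and y are adjacent
  iff one is obtained from the other by appending one letter. Every vertex has degree kappa+1.\<close>

definition cayley_V :: "nat \<Rightarrow> nat list set" where
  "cayley_V \<kappa> = {xs. set xs \<subseteq> {..\<kappa>} \<and> successively (\<noteq>) xs}"

definition cayley_adj :: "nat \<Rightarrow> nat list \<Rightarrow> nat list \<Rightarrow> bool" where
  "cayley_adj \<kappa> x y \<longleftrightarrow> x \<in> cayley_V \<kappa> \<and> y \<in> cayley_V \<kappa> \<and>
     (\<exists>i. y = x @ [i] \<or> x = y @ [i])"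

definition cayley_dist :: "nat \<Rightarrow> nat list \<Rightarrow> nat list \<Rightarrow> nat" where
  "cayley_dist \<kappa> x y = (LEAST n. (cayley_adj \<kappa> ^^ n) x y)"

fun cartier_dunau :: "nat \<Rightarrow> nat \<Rightarrow> complex poly" where
  "cartier_dunau \<kappa> 0 = 1"
| "cartier_dunau \<kappa> (Suc 0) = [:0, 1:]"
| "cartier_dunau \<kappa> (Suc (Suc n)) =
     smult (1 / of_nat \<kappa>)
       (smult (of_nat \<kappa> + 1) (pCons 0 (cartier_dunau \<kappa> (Suc n))) - cartier_dunau \<kappa> n)"

definition Pi_density :: "nat \<Rightarrow> real \<Rightarrow> real" where
  "Pi_density \<kappa> t = (real \<kappa> + 1) / (2 * pi) *
      sqrt (4 * real \<kappa> / (real \<kappa> + 1)^2 - t^2) / (1 - t^2) *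
      indicator {- 2 * sqrt (real \<kappa>) / (real \<kappa> + 1) .. 2 * sqrt (real \<kappa>) / (real \<kappa> + 1)} t"

definition Pi_measure :: "nat \<Rightarrow> real measure" where
  "Pi_measure \<kappa> = density lborel (\<lambda>t. ennreal (Pi_density \<kappa> t))"

definition cd_hat :: "nat \<Rightarrow> complex poly \<Rightarrow> nat \<Rightarrow> complex" where
  "cd_hat \<kappa> \<phi> n = (LINT t | Pi_measure \<kappa>.
       poly (cartier_dunau \<kappa> n) (complex_of_real t) * poly \<phi> (complex_of_real t))"

definition T_kernel :: "nat \<Rightarrow> complex poly \<Rightarrow> nat list \<Rightarrow> nat list \<Rightarrow> complex" where
  "T_kernel \<kappa> \<phi> x y = cd_hat \<kappa> \<phi> (cayley_dist \<kappa> x y)"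

text \<open>Convolution, relative to a geodesic ray v.\<close>
definition tree_conv :: "nat \<Rightarrow> (nat \<Rightarrow> nat list) \<Rightarrow> (nat \<Rightarrow> complex) \<Rightarrow> (nat \<Rightarrow> complex) \<Rightarrow> nat \<Rightarrow> complex" where
  "tree_conv \<kappa> v \<alpha>1 \<alpha>2 n =
     (\<Sum>\<^sub>\<infinity>x\<in>cayley_V \<kappa>. \<alpha>1 (cayley_dist \<kappa> (v 0) x) * \<alpha>2 (cayley_dist \<kappa> x (v n)))"

end

theory Submission
  imports Defs "HOL-Library.Sublist"
begin


abbreviation lcp where "lcp \<equiv> longest_common_prefix"

lemma lcp_sym: "lcp x y = lcp y x"
  by (induction x y rule: longest_common_prefix.induct) auto

lemma lcp_iff: "prefix p (lcp x y) \<longleftrightarrow> prefix p x \<and> prefix p y"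
  by (meson longest_common_prefix_max_prefix longest_common_prefix_prefix1
      longest_common_prefix_prefix2 prefix_order.trans)

lemma lcp_eqI: "prefix p x \<Longrightarrow> prefix p y \<Longrightarrow> (\<And>q. prefix q x \<Longrightarrow> prefix q y \<Longrightarrow> prefix q p) \<Longrightarrow> lcp x y = p"
  by (meson longest_common_prefix_max_prefix longest_common_prefix_prefix1
      longest_common_prefix_prefix2 prefix_order.antisym)

lemma lcp_len1: "length (lcp x y) \<le> length x"
  by (simp add: longest_common_prefix_prefix1 prefix_length_le)
lemma lcp_len2: "length (lcp x y) \<le> length y"
  by (simp add: longest_common_prefix_prefix2 prefix_length_le)

lemma lcp_prefix: "prefix x y \<Longrightarrow> lcp x y = x"
  by (rule lcp_eqI) auto

definition D :: "nat list \<Rightarrow> nat list \<Rightarrow> nat" where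
  "D x y = length x + length y - 2 * length (lcp x y)"

lemma D_sym: "D x y = D y x"
  unfolding D_def by (simp add: lcp_sym add.commute)

lemma D_self[simp]: "D x x = 0"
  unfolding D_def by (simp add: lcp_prefix)

lemma prefix_same_len: "prefix p x \<Longrightarrow> length x \<le> length p \<Longrightarrow> p = x"
  by (auto simp: prefix_def)

lemma D_eq0: "D x y = 0 \<longleftrightarrow> x = y"
proof
  assume "D x y = 0"
  then have "length x = length (lcp x y)" "length y = length (lcp x y)"
    using lcp_len1[of x y] lcp_len2[of x y] unfolding D_def by linarith+
  then show "x = y"
    by (metis le_refl longest_common_prefix_prefix1 longest_common_prefix_prefix2 prefix_same_len)
qed simp

lemma lcp_snoc: "lcp (x @ [i]) y = (if prefix (x @ [i]) y then x @ [i] else lcp x y)"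
proof (cases "prefix (x @ [i]) y")
  case True then show ?thesis by (simp add: lcp_prefix)
next
  case False
  show ?thesis using False
    apply simp
    apply (rule lcp_eqI)
    apply (meson longest_common_prefix_prefix1 prefix_order.trans prefix_snoc)
    apply (simp add: longest_common_prefix_prefix2)
    apply (metis longest_common_prefix_max_prefix prefix_snoc)
    done
qed

lemma lcp_butlast: "x \<noteq> [] \<Longrightarrow> lcp (butlast x) y = (if prefix x y then butlast x else lcp x y)"
proof (cases "prefix x y")
  case True
  assume "x \<noteq> []"
  have "prefix (butlast x) x" by (simp add: prefixeq_butlast)
  then show ?thesis using True by (simp add: lcp_prefix prefix_order.trans[OF _ True])
next
  case False
  assume ne: "x \<noteq> []"
  have xe: "x = butlast x @ [last x]" using ne by simp
  show ?thesis using False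
    apply simp
    apply (rule lcp_eqI)
    apply (metis longest_common_prefix_prefix1 longest_common_prefix_prefix2 prefix_snoc xe)
    apply (simp add: longest_common_prefix_prefix2)
    apply (metis longest_common_prefix_max_prefix prefix_order.trans prefixeq_butlast)
    done
qed

lemma D_snoc: "D (x @ [i]) y = (if prefix (x @ [i]) y then D x y - 1 else D x y + 1)"
proof (cases "prefix (x @ [i]) y")
  case True
  have "prefix x (x @ [i])" by simp
  then have "prefix x y" using True by (rule prefix_order.trans)
  then show ?thesis using True unfolding D_def by (simp add: lcp_snoc lcp_prefix)
next
  case False
  then show ?thesis unfolding D_def using lcp_len1[of x y] lcp_len2[of x y]
    by (simp add: lcp_snoc)
qed

lemma D_butlast: "x \<noteq> [] \<Longrightarrow> D (butlast x) y = (if prefix x y then D x y + 1 else D x y - 1)"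
proof (cases "prefix x y")
  case True
  assume ne: "x \<noteq> []"
  then have "length y \<ge> length x" using True prefix_length_le by blast
  moreover have "length x > 0" using ne by simp
  ultimately show ?thesis using True ne unfolding D_def
    apply (simp add: lcp_butlast lcp_prefix)
    using \<open>length x > 0\<close> \<open>length y \<ge> length x\<close> by linarith
next
  case False
  assume ne: "x \<noteq> []"
  have "lcp x y \<noteq> x" using False by (metis longest_common_prefix_prefix2)
  then have "length (lcp x y) < length x"
    using lcp_len1[of x y] prefix_same_len[OF longest_common_prefix_prefix1[of x y]] by fastforce
  moreover have "lcp (butlast x) y = lcp x y" using lcp_butlast[OF ne] False by simp
  moreover have "length (butlast x) = length x - 1" by simp
  ultimately show ?thesis using False ne lcp_len2[of x y] unfolding D_def
    by (simp only: if_False)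
qed


lemma V_take: "x \<in> cayley_V k \<Longrightarrow> take m x \<in> cayley_V k"
proof -
  assume x: "x \<in> cayley_V k"
  have "successively (\<noteq>) (take m x @ drop m x)" using x unfolding cayley_V_def by simp
  then have "successively (\<noteq>) (take m x)" by (simp only: successively_append_iff)
  then show ?thesis using x set_take_subset[of m x] unfolding cayley_V_def by auto
qed

lemma V_prefix: "prefix p x \<Longrightarrow> x \<in> cayley_V k \<Longrightarrow> p \<in> cayley_V k"
  by (metis V_take prefix_def append_eq_conv_conj)

lemma V_snoc: "x @ [i] \<in> cayley_V k \<longleftrightarrow> x \<in> cayley_V k \<and> i \<le> k \<and> (x = [] \<or> last x \<noteq> i)"
  unfolding cayley_V_def by (auto simp: successively_append_iff)

lemma adj_sym: "cayley_adj k x y = cayley_adj k y x"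
  unfolding cayley_adj_def by blast

lemma adj_D: "cayley_adj k u w \<Longrightarrow> D x w \<le> D x u + 1"
proof -
  assume "cayley_adj k u w"
  then obtain i where "w = u @ [i] \<or> u = w @ [i]" unfolding cayley_adj_def by blast
  then show ?thesis
  proof
    assume "w = u @ [i]"
    then show ?thesis using D_snoc[of u i x] D_sym by (auto split: if_splits)
  next
    assume h: "u = w @ [i]"
    then have "w = butlast u" "u \<noteq> []" by auto
    then show ?thesis using D_butlast[of u x] D_sym by (auto split: if_splits)
  qed
qed

lemma relpow_D: "(cayley_adj k ^^ n) x y \<Longrightarrow> D x y \<le> n"
proof (induction n arbitrary: y)
  case 0
  then show ?case by simp
next
  case (Suc n)
  then obtain z where "(cayley_adj k ^^ n) x z" "cayley_adj k z y" by auto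
  then show ?case using Suc.IH adj_D[of k z y x] by fastforce
qed

lemma path_down: "y \<in> cayley_V k \<Longrightarrow> m + j \<le> length y \<Longrightarrow> (cayley_adj k ^^ j) (take m y) (take (m + j) y)"
proof (induction j)
  case 0
  then show ?case by simp
next
  case (Suc j)
  have "take (m + Suc j) y = take (m + j) y @ [y ! (m + j)]"
    using Suc.prems by (simp add: take_Suc_conv_app_nth)
  then have "cayley_adj k (take (m + j) y) (take (m + Suc j) y)"
    unfolding cayley_adj_def using V_take[OF Suc.prems(1)] by metis
  then show ?case using Suc by (auto intro: relpowp_Suc_I)
qed

lemma path_up: "y \<in> cayley_V k \<Longrightarrow> m + j \<le> length y \<Longrightarrow> (cayley_adj k ^^ j) (take (m + j) y) (take m y)"
proof (induction j)
  case 0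
  then show ?case by simp
next
  case (Suc j)
  have "take (m + Suc j) y = take (m + j) y @ [y ! (m + j)]"
    using Suc.prems by (simp add: take_Suc_conv_app_nth)
  then have "cayley_adj k (take (m + Suc j) y) (take (m + j) y)"
    unfolding cayley_adj_def using V_take[OF Suc.prems(1)] by metis
  moreover have "(cayley_adj k ^^ j) (take (m + j) y) (take m y)" using Suc by simp
  ultimately show ?case by (rule relpowp_Suc_I2)
qed

lemma path_D: "x \<in> cayley_V k \<Longrightarrow> y \<in> cayley_V k \<Longrightarrow> (cayley_adj k ^^ D x y) x y"
proof -
  assume x: "x \<in> cayley_V k" and y: "y \<in> cayley_V k"
  define L where "L = length (lcp x y)"
  have L1: "L \<le> length x" and L2: "L \<le> length y" using lcp_len1 lcp_len2 L_def by auto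
  have tx: "take L x = lcp x y"
    by (metis L_def append_eq_conv_conj longest_common_prefix_prefix1 prefix_def)
  have ty: "take L y = lcp x y"
    by (metis L_def append_eq_conv_conj longest_common_prefix_prefix2 prefix_def)
  have "(cayley_adj k ^^ (length x - L)) x (lcp x y)"
    using path_up[OF x, of L "length x - L"] L1 tx by simp
  moreover have "(cayley_adj k ^^ (length y - L)) (lcp x y) y"
    using path_down[OF y, of L "length y - L"] L2 ty by simp
  ultimately have "(cayley_adj k ^^ ((length x - L) + (length y - L))) x y"
    by (metis relpowp_add relcompp.relcompI)
  moreover have "D x y = (length x - L) + (length y - L)" unfolding D_def L_def[symmetric]
    using L1 L2 by simp
  ultimately show ?thesis by simp
qed

lemma dist_eq: "x \<in> cayley_V k \<Longrightarrow> y \<in> cayley_V k \<Longrightarrow> cayley_dist k x y = D x y"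
  unfolding cayley_dist_def
  by (rule Least_equality) (auto intro: path_D dest: relpow_D)


definition Nb :: "nat \<Rightarrow> nat list \<Rightarrow> nat list set" where
  "Nb k x = {w \<in> cayley_V k. D x w = 1}"

definition Ich :: "nat \<Rightarrow> nat list \<Rightarrow> nat set" where
  "Ich k x = {i. i \<le> k \<and> (x = [] \<or> last x \<noteq> i)}"

lemma D1: "D x w = 1 \<Longrightarrow> (\<exists>i. w = x @ [i]) \<or> (x \<noteq> [] \<and> w = butlast x)"
proof -
  assume d: "D x w = 1"
  obtain L where L_def: "L = length (lcp x w)" by blast
  have L1: "L \<le> length x" and L2: "L \<le> length w" using lcp_len1 lcp_len2 L_def by auto
  have "length x + length w - 2 * L = 1" using d unfolding D_def L_def .
  then have "(length x = L \<and> length w = L + 1) \<or> (length w = L \<and> length x = L + 1)"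
    using L1 L2 by linarith
  then show ?thesis
  proof
    assume h: "length x = L \<and> length w = L + 1"
    have "lcp x w = x"
      by (rule prefix_same_len[OF longest_common_prefix_prefix1[of x w]]) (use h L_def in linarith)
    then have "prefix x w" by (metis longest_common_prefix_prefix2)
    then obtain r where r: "w = x @ r" by (auto simp: prefix_def)
    then have "length r = 1" using h by simp
    then obtain i where "r = [i]" by (cases r) auto
    then show ?thesis using r by blast
  next
    assume h: "length w = L \<and> length x = L + 1"
    have "lcp x w = w"
      by (rule prefix_same_len[OF longest_common_prefix_prefix2[of x w]]) (use h L_def in linarith)
    then have "prefix w x" by (metis longest_common_prefix_prefix1)
    then obtain r where r: "x = w @ r" by (auto simp: prefix_def)
    then have "length r = 1" using h by simp
    then obtain i where "r = [i]" by (cases r) auto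
    then show ?thesis using r by simp
  qed
qed

lemma D_child: "D x (x @ [i]) = 1"
  using D_snoc[of x i x] D_sym[of x "x @ [i]"] by simp

lemma D_parent: "x \<noteq> [] \<Longrightarrow> D x (butlast x) = 1"
  using D_butlast[of x x] D_sym[of x "butlast x"] by simp

lemma Nb_eq: "x \<in> cayley_V k \<Longrightarrow>
  Nb k x = (\<lambda>i. x @ [i]) ` Ich k x \<union> (if x = [] then {} else {butlast x})"
proof -
  assume x: "x \<in> cayley_V k"
  show ?thesis
  proof (rule set_eqI, rule iffI)
    fix w assume "w \<in> Nb k x"
    then have w: "w \<in> cayley_V k" "D x w = 1" unfolding Nb_def by auto
    from D1[OF w(2)] show "w \<in> (\<lambda>i. x @ [i]) ` Ich k x \<union> (if x = [] then {} else {butlast x})"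
    proof
      assume "\<exists>i. w = x @ [i]"
      then obtain i where i: "w = x @ [i]" by blast
      then have "i \<in> Ich k x" using w(1) V_snoc unfolding Ich_def by auto
      then show ?thesis using i by auto
    qed auto
  next
    fix w assume "w \<in> (\<lambda>i. x @ [i]) ` Ich k x \<union> (if x = [] then {} else {butlast x})"
    then show "w \<in> Nb k x"
    proof
      assume "w \<in> (\<lambda>i. x @ [i]) ` Ich k x"
      then obtain i where i: "i \<in> Ich k x" "w = x @ [i]" by auto
      then have "w \<in> cayley_V k" using x V_snoc unfolding Ich_def by auto
      then show ?thesis using i D_child unfolding Nb_def by auto
    next
      assume h: "w \<in> (if x = [] then {} else {butlast x})"
      then have "x \<noteq> []" "w = butlast x" by (auto split: if_splits)
      moreover have "butlast x \<in> cayley_V k" using V_take[OF x] by (simp add: butlast_conv_take)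
      ultimately show ?thesis using D_parent unfolding Nb_def by auto
    qed
  qed
qed

lemma Ich_finite: "finite (Ich k x)"
  unfolding Ich_def by auto

lemma card_Ich: "x \<in> cayley_V k \<Longrightarrow> card (Ich k x) = (if x = [] then k + 1 else k)"
proof (cases "x = []")
  case True
  then have "Ich k x = {..k}" unfolding Ich_def by auto
  then show ?thesis using True by simp
next
  case False
  assume x: "x \<in> cayley_V k"
  have "last x \<in> set x" using False by simp
  then have "last x \<le> k" using x unfolding cayley_V_def by auto
  have "Ich k x = {..k} - {last x}" using False unfolding Ich_def by auto
  then show ?thesis using False \<open>last x \<le> k\<close> by simp
qed

lemma Nb_finite: "x \<in> cayley_V k \<Longrightarrow> finite (Nb k x)"
  using Nb_eq Ich_finite by simp

lemma sum_Nb_split: "x \<in> cayley_V k \<Longrightarrow>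
  (\<Sum>w\<in>Nb k x. f w) = (\<Sum>i\<in>Ich k x. f (x @ [i])) + (if x = [] then 0 else f (butlast x))"
proof -
  assume x: "x \<in> cayley_V k"
  have inj: "inj_on (\<lambda>i. x @ [i]) (Ich k x)" by (auto simp: inj_on_def)
  have nb: "\<And>i. butlast x \<noteq> x @ [i]"
  proof
    fix i assume "butlast x = x @ [i]"
    then have "length (butlast x) = length (x @ [i])" by simp
    then show False by simp
  qed
  have disj: "(\<lambda>i. x @ [i]) ` Ich k x \<inter> (if x = [] then {} else {butlast x}) = {}"
    using nb by (auto split: if_splits)
  have "(\<Sum>w\<in>Nb k x. f w) = (\<Sum>w\<in>(\<lambda>i. x @ [i]) ` Ich k x. f w) + (\<Sum>w\<in>(if x = [] then {} else {butlast x}). f w)"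
    unfolding Nb_eq[OF x] by (rule sum.union_disjoint) (auto simp: Ich_finite disj)
  also have "\<dots> = (\<Sum>i\<in>Ich k x. f (x @ [i])) + (if x = [] then 0 else f (butlast x))"
    by (simp add: sum.reindex[OF inj])
  finally show ?thesis .
qed

lemma sum_Nb: fixes h :: "nat \<Rightarrow> 'a::comm_ring_1"
  assumes x: "x \<in> cayley_V k" and y: "y \<in> cayley_V k"
  shows "(\<Sum>w\<in>Nb k x. h (D w y)) =
    (if x = y then of_nat (k + 1) * h 1 else h (D x y - 1) + of_nat k * h (D x y + 1))"
proof -
  have S: "(\<Sum>w\<in>Nb k x. h (D w y)) = (\<Sum>i\<in>Ich k x. h (D (x @ [i]) y)) +
      (if x = [] then 0 else h (D (butlast x) y))"
    by (rule sum_Nb_split[OF x])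
  show ?thesis
  proof (cases "prefix x y")
    case True
    show ?thesis
    proof (cases "x = y")
      case True
      have "\<And>i. D (x @ [i]) y = 1" using True D_snoc[of x _ x] by simp
      moreover have "x \<noteq> [] \<Longrightarrow> D (butlast x) y = 1" using True D_butlast[of x x] by simp
      ultimately show ?thesis using S card_Ich[OF x] True by (simp add: algebra_simps)
    next
      case False
      obtain z where z: "y = x @ z" using \<open>prefix x y\<close> by (auto simp: prefix_def)
      then obtain j r where jr: "y = x @ j # r" using False by (cases z) auto
      have "prefix (x @ [j]) y" using jr by simp
      then have "x @ [j] \<in> cayley_V k" using V_prefix y by blast
      then have j: "j \<in> Ich k x" using V_snoc unfolding Ich_def by auto
      have pj: "\<And>i. prefix (x @ [i]) y \<longleftrightarrow> i = j" using jr by auto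
      have "(\<Sum>i\<in>Ich k x. h (D (x @ [i]) y)) =
          h (D (x @ [j]) y) + (\<Sum>i\<in>Ich k x - {j}. h (D (x @ [i]) y))"
        using j Ich_finite by (simp add: sum.remove)
      also have "\<dots> = h (D x y - 1) + (\<Sum>i\<in>Ich k x - {j}. h (D x y + 1))"
        using pj D_snoc[of x _ y] by (auto intro!: sum.cong)
      also have "\<dots> = h (D x y - 1) + of_nat (card (Ich k x) - 1) * h (D x y + 1)"
        using j Ich_finite by simp
      finally have C: "(\<Sum>i\<in>Ich k x. h (D (x @ [i]) y)) = h (D x y - 1) + of_nat (card (Ich k x) - 1) * h (D x y + 1)" .
      have cpos: "card (Ich k x) \<ge> 1" using j Ich_finite by (metis One_nat_def Suc_leI card_gt_0_iff empty_iff)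
      show ?thesis
      proof (cases "x = []")
        case True
        then show ?thesis using S C card_Ich[OF x] False by simp
      next
        case xne: False
        have P: "D (butlast x) y = D x y + 1" using D_butlast[OF xne] \<open>prefix x y\<close> by simp
        have "k \<ge> 1" using cpos card_Ich[OF x] xne by simp
        then have "of_nat (k - 1) + (1::'a) = of_nat k" by (metis of_nat_1 of_nat_add le_add_diff_inverse2)
        then show ?thesis using S C P card_Ich[OF x] False xne by (simp add: algebra_simps)
          (metis distrib_right mult_1 add.commute)
      qed
    qed
  next
    case False
    then have xne: "x \<noteq> []" by auto
    have "\<And>i. \<not> prefix (x @ [i]) y" using False by (metis prefix_order.trans prefix_snoc prefix_order.refl)
    then have C: "\<And>i. D (x @ [i]) y = D x y + 1" using D_snoc by simp
    have P: "D (butlast x) y = D x y - 1" using D_butlast[OF xne] False by simp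
    have "x \<noteq> y" using False by auto
    then show ?thesis using S C P card_Ich[OF x] xne by (simp add: algebra_simps)
  qed
qed



fun cdr :: "nat \<Rightarrow> nat \<Rightarrow> real \<Rightarrow> real" where
  "cdr k 0 t = 1"
| "cdr k (Suc 0) t = t"
| "cdr k (Suc (Suc n)) t = ((real k + 1) * t * cdr k (Suc n) t - cdr k n t) / real k"

lemma cd_poly: "poly (cartier_dunau k n) (complex_of_real t) = complex_of_real (cdr k n t)"
  by (induction k n t rule: cdr.induct) (simp_all add: field_simps)

lemma cdr_neg: "cdr k n (-t) = (-1)^n * cdr k n t"
  by (induction k n t rule: cdr.induct) (simp_all add: field_simps)

lemma cdr_cont2: "continuous_on S (cdr k n) \<and> continuous_on S (cdr k (Suc n))"
proof (induction n)
  case 0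
  have "cdr k 0 = (\<lambda>t. 1)" "cdr k (Suc 0) = (\<lambda>t. t)" by auto
  then show ?case by (auto intro!: continuous_intros)
next
  case (Suc n)
  have "cdr k (Suc (Suc n)) = (\<lambda>t. inverse (real k) * ((real k + 1) * t * cdr k (Suc n) t - cdr k n t))"
    by (auto simp: divide_inverse mult.commute)
  then show ?case using Suc by (auto intro!: continuous_intros)
qed

lemma cdr_cont: "continuous_on S (cdr k n)"
  using cdr_cont2 by blast

definition aa :: "nat \<Rightarrow> real" where "aa k = 2 * sqrt (real k) / (real k + 1)"
definition Den :: "nat \<Rightarrow> real \<Rightarrow> real" where "Den k x = (real k)^2 + 1 - 2 * real k * cos (2 * x)"
definition sfun :: "nat \<Rightarrow> nat \<Rightarrow> real \<Rightarrow> real" where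
  "sfun k n x = real k * sin ((real n + 1) * x) - sin ((real n - 1) * x)"
definition gg :: "nat \<Rightarrow> nat \<Rightarrow> real \<Rightarrow> real" where
  "gg k n x = sin x * sfun k n x / Den k x"

lemma Den_alt: "Den k x = (real k - 1)^2 + 4 * real k * (sin x)^2"
  unfolding Den_def cos_double_sin by (simp add: power2_eq_square algebra_simps)

lemma sin_sum2: "sin ((y::real) + x) + sin (y - x) = 2 * sin y * cos x"
  by (simp add: sin_add sin_diff)

lemma sfun_rec: "sfun k (Suc (Suc n)) x = 2 * cos x * sfun k (Suc n) x - sfun k n x"
proof -
  have 1: "sin ((real n + 3) * x) + sin ((real n + 1) * x) = 2 * sin ((real n + 2) * x) * cos x"
    using sin_sum2[of "(real n + 2) * x" x] by (simp add: algebra_simps)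
  have 2: "sin ((real n + 1) * x) + sin ((real n - 1) * x) = 2 * sin (real n * x) * cos x"
    using sin_sum2[of "real n * x" x] by (simp add: algebra_simps)
  have 1: "real k * sin ((real n + 3) * x) + real k * sin ((real n + 1) * x) = 2 * real k * sin ((real n + 2) * x) * cos x"
    using arg_cong[OF 1, of "\<lambda>z. real k * z"] by (simp add: algebra_simps)
  show ?thesis unfolding sfun_def using 1 2
    by (simp add: algebra_simps)
qed

lemma trig_cdr:
  assumes k: "k \<ge> 1"
  shows "(real k + 1) * sqrt (real k) ^ n * sin x * cdr k n (aa k * cos x) = sfun k n x"
proof (induction n rule: less_induct)
  case (less n)
  have s2: "sqrt (real k) * sqrt (real k) = real k" by simp
  have kp: "real k > 0" using k by simp
  show ?case
  proof (cases n)
    case 0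
    then show ?thesis unfolding sfun_def by (simp add: algebra_simps)
  next
    case (Suc m)
    show ?thesis
    proof (cases m)
      case 0
      have a: "(real k + 1) * sqrt (real k) ^ 1 * sin x * (aa k * cos x) = 2 * (sqrt (real k) * sqrt (real k)) * sin x * cos x"
        unfolding aa_def by (simp add: field_simps del: real_sqrt_mult_self)
      have b: "sfun k 1 x = real k * (2 * sin x * cos x)"
        unfolding sfun_def using sin_double[of x] by simp
      have "(real k + 1) * sqrt (real k) ^ n * sin x * cdr k n (aa k * cos x) = (real k + 1) * sqrt (real k) ^ 1 * sin x * (aa k * cos x)"
        using Suc 0 by simp
      also have "\<dots> = 2 * real k * sin x * cos x" using a unfolding s2 .
      also have "\<dots> = sfun k n x" using b Suc 0 by simp
      finally show ?thesis .
    next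
      case (Suc j)
      have IH1: "(real k + 1) * sqrt (real k) ^ (Suc j) * sin x * cdr k (Suc j) (aa k * cos x) = sfun k (Suc j) x"
        by (rule less.IH) (use \<open>n = Suc m\<close> Suc in simp)
      have IH0: "(real k + 1) * sqrt (real k) ^ j * sin x * cdr k j (aa k * cos x) = sfun k j x"
        by (rule less.IH) (use \<open>n = Suc m\<close> Suc in simp)
      have e: "sqrt (real k) ^ (Suc (Suc j)) = real k * sqrt (real k) ^ j"
        by (simp add: s2)
      have "(real k + 1) * aa k * sqrt (real k) = 2 * (sqrt (real k) * sqrt (real k))"
        unfolding aa_def by (simp add: field_simps del: real_sqrt_mult_self)
      then have e2: "(real k + 1) * aa k * sqrt (real k) = 2 * real k"
        unfolding s2 .
      have "(real k + 1) * sqrt (real k) ^ n * sin x * cdr k n (aa k * cos x)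
          = (real k + 1) * sqrt (real k) ^ j * sin x * ((real k + 1) * (aa k * cos x) * cdr k (Suc j) (aa k * cos x) - cdr k j (aa k * cos x))"
      proof -
        have en: "sqrt (real k) ^ n = real k * sqrt (real k) ^ j"
          unfolding \<open>n = Suc m\<close> Suc by (rule e)
        have cn: "cdr k n (aa k * cos x) = ((real k + 1) * (aa k * cos x) * cdr k (Suc j) (aa k * cos x) - cdr k j (aa k * cos x)) / real k"
          using \<open>n = Suc m\<close> Suc by simp
        show ?thesis unfolding en cn using kp by (simp add: field_simps)
      qed
      also have "\<dots> = 2 * cos x * ((real k + 1) * sqrt (real k) ^ (Suc j) * sin x * cdr k (Suc j) (aa k * cos x))
           - (real k + 1) * sqrt (real k) ^ j * sin x * cdr k j (aa k * cos x)"
      proof -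
        have r: "sqrt (real k) = (real k + 1) * aa k / 2" unfolding aa_def by simp
        have gen: "(real k + 1) * S * s * ((real k + 1) * (B * c) * C1 - C0) = 2 * c * ((real k + 1) * (r * S) * s * C1) - (real k + 1) * S * s * C0"
          if "r = (real k + 1) * B / 2" for B c C1 C0 S s r :: real
          unfolding that by (simp add: field_simps)
        show ?thesis by (simp only: power_Suc) (rule gen[OF r])
      qed
      also have "\<dots> = sfun k n x" using IH1 IH0 sfun_rec \<open>n = Suc m\<close> Suc by simp
      finally show ?thesis .
    qed
  qed
qed


lemma Den_nonneg: "Den k x \<ge> 0"
  unfolding Den_alt by simp

lemma Den_zero: "k \<ge> 1 \<Longrightarrow> Den k x = 0 \<Longrightarrow> k = 1 \<and> sin x = 0"
  unfolding Den_alt by (simp add: add_nonneg_eq_0_iff)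

lemma sfun_rec2: "real k * sfun k n x - sfun k (Suc (Suc n)) x = sin ((real n + 1) * x) * Den k x"
proof -
  have 1: "sin ((real n + 1) * x + 2 * x) + sin ((real n + 1) * x - 2 * x) = 2 * sin ((real n + 1) * x) * cos (2 * x)"
    by (rule sin_sum2)
  have 1: "sin ((real n + 3) * x) + sin ((real n - 1) * x) = 2 * sin ((real n + 1) * x) * cos (2 * x)"
    using 1 by (simp add: algebra_simps)
  have 1: "real k * sin ((real n + 3) * x) + real k * sin ((real n - 1) * x) = 2 * real k * sin ((real n + 1) * x) * cos (2 * x)"
    using arg_cong[OF 1, of "\<lambda>z. real k * z"] by (simp add: algebra_simps)
  show ?thesis unfolding sfun_def Den_def using 1 by (simp add: algebra_simps power2_eq_square)
qed

lemma gg_rec: assumes "k \<ge> 1"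
  shows "real k * gg k n x - gg k (Suc (Suc n)) x = sin x * sin ((real n + 1) * x)"
proof (cases "Den k x = 0")
  case True
  then show ?thesis using Den_zero[OF assms] unfolding gg_def by simp
next
  case False
  have "real k * gg k n x - gg k (Suc (Suc n)) x = sin x * (real k * sfun k n x - sfun k (Suc (Suc n)) x) / Den k x"
    unfolding gg_def by (simp add: algebra_simps diff_divide_distrib)
  also have "\<dots> = sin x * sin ((real n + 1) * x)" unfolding sfun_rec2 using False by simp
  finally show ?thesis .
qed

lemma sin_mpi_minus: "sin (real m * pi - y) = - ((-1)^m * sin y)"
  by (simp add: sin_diff)

lemma gg_reflect: "gg k n (pi - x) = (-1)^n * gg k n x"
proof -
  have a: "sin ((real n + 1) * (pi - x)) = (-1)^n * sin ((real n + 1) * x)"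
    using sin_mpi_minus[of "Suc n" "(real n + 1) * x"] by (simp add: algebra_simps)
  have "sin ((real n - 1) * (pi - x)) = sin ((real (Suc n) * pi - (real n - 1) * x) - 2 * pi)"
    by (simp add: algebra_simps)
  also have "\<dots> = sin (real (Suc n) * pi - (real n - 1) * x)" by (simp add: sin_diff)
  also have "\<dots> = (-1)^n * sin ((real n - 1) * x)" by (subst sin_mpi_minus) simp
  finally have b: "sin ((real n - 1) * (pi - x)) = (-1)^n * sin ((real n - 1) * x)" .
  have c: "cos (2 * (pi - x)) = cos (2 * x)"
    by (simp add: algebra_simps cos_diff)
  show ?thesis unfolding gg_def sfun_def Den_def a b c by (simp add: algebra_simps)
qed

lemma int_sinsin: "((\<lambda>x. sin x * sin ((real n + 1) * x)) has_integral (if n = 0 then pi / 2 else 0)) {0..pi}"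
proof (cases "n = 0")
  case True
  have "((\<lambda>x. sin x * sin ((real n + 1) * x)) has_integral ((\<lambda>x. x / 2 - sin (2 * x) / 4) pi - (\<lambda>x. x / 2 - sin (2 * x) / 4) 0)) {0..pi}"
  proof (rule fundamental_theorem_of_calculus)
    fix x :: real
    have "((\<lambda>x. x / 2 - sin (2 * x) / 4) has_real_derivative (1 / 2 - cos (2 * x) * 2 / 4)) (at x within {0..pi})"
      by (auto intro!: derivative_eq_intros)
    moreover have "1 / 2 - cos (2 * x) * 2 / 4 = sin x * sin ((real n + 1) * x)"
      using True cos_double_sin[of x] by (simp add: power2_eq_square field_simps)
    ultimately show "((\<lambda>x. x / 2 - sin (2 * x) / 4) has_vector_derivative sin x * sin ((real n + 1) * x)) (at x within {0..pi})"
      by (simp add: has_real_derivative_iff_has_vector_derivative)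
  qed simp
  then show ?thesis using True by simp
next
  case False
  define F where "F x = (sin (real n * x) / real n - sin ((real n + 2) * x) / (real n + 2)) / 2" for x
  have "((\<lambda>x. sin x * sin ((real n + 1) * x)) has_integral (F pi - F 0)) {0..pi}"
  proof (rule fundamental_theorem_of_calculus)
    fix x :: real
    have "(F has_real_derivative ((cos (real n * x) * real n / real n - cos ((real n + 2) * x) * (real n + 2) / (real n + 2)) / 2)) (at x within {0..pi})"
      unfolding F_def by (auto intro!: derivative_eq_intros)
    moreover have "(cos (real n * x) * real n / real n - cos ((real n + 2) * x) * (real n + 2) / (real n + 2)) / 2 = sin x * sin ((real n + 1) * x)"
    proof -
      have "cos (real n * x) = cos ((real n + 1) * x - x)" by (simp add: algebra_simps)
      moreover have "cos ((real n + 2) * x) = cos ((real n + 1) * x + x)" by (simp add: algebra_simps)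
      ultimately show ?thesis using False by (simp add: cos_diff cos_add)
    qed
    ultimately show "(F has_vector_derivative sin x * sin ((real n + 1) * x)) (at x within {0..pi})"
      by (simp add: has_real_derivative_iff_has_vector_derivative)
  qed simp
  moreover have "F pi = 0" "F 0 = 0" unfolding F_def
    using sin_npi[of n] sin_npi[of "n + 2"] by (simp_all add: algebra_simps)
  ultimately show ?thesis using False by simp
qed


lemma gg0: "gg k 0 x = (real k + 1) * (sin x)^2 / Den k x"
  unfolding gg_def sfun_def by (simp add: algebra_simps power2_eq_square)

lemma arctan_aux:
  fixes c s K :: real
  assumes sc: "s^2 + c^2 = 1" and Kc: "K - c > 0"
  shows "inverse (1 + (s / (K - c))^2) * (c * 2 * (K - c) - s * (s * 2)) / ((K - c) * (K - c)) =
         (2 * (K * c) - 2) / (K^2 + 1 - 2 * K * c)"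
proof -
  have E: "K^2 + 1 - 2 * K * c = (K - c)^2 + s^2" using sc by (simp add: power2_eq_square algebra_simps)
  have P: "(K - c)^2 + s^2 > 0" using Kc by (simp add: add_pos_nonneg)
  have 1: "1 + (s / (K - c))^2 = ((K - c)^2 + s^2) / (K - c)^2"
    using Kc by (simp add: field_simps)
  have 2: "c * 2 * (K - c) - s * (s * 2) = 2 * (K * c) - 2"
    using sc by (simp add: power2_eq_square algebra_simps)
  have Q: "(K - c) * (K - c) = (K - c)^2" by (simp add: power2_eq_square)
  have Qn: "(K - c)^2 \<noteq> 0" using Kc by simp
  have gen: "inverse (PP / QQ) * YY / QQ = YY / PP" if "QQ \<noteq> 0" for PP QQ YY :: real
    using that by (simp add: field_simps)
  have "inverse (((K - c)^2 + s^2) / (K - c)^2) * (2 * (K * c) - 2) / (K - c)^2 = (2 * (K * c) - 2) / ((K - c)^2 + s^2)"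
    by (rule gen[OF Qn])
  then show ?thesis unfolding 1 2 E Q .
qed

lemma arctan_deriv:
  assumes k: "k > 1"
  shows "((\<lambda>x. arctan (sin (2 * x) / (real k - cos (2 * x)))) has_real_derivative
           (2 * (real k * cos (2 * x) - 1) / Den k x)) (at x within S)"
proof -
  have c: "real k - cos (2 * x) > 0" using k cos_le_one[of "2*x"] by linarith
  have "(real k - 1)^2 > 0" using k by simp
  then have D: "Den k x > 0" unfolding Den_alt by (simp add: add_pos_nonneg)
  show ?thesis
    using c apply (auto intro!: derivative_eq_intros)
    using arctan_aux[of "sin (2 * x)" "cos (2 * x)" "real k"] c unfolding Den_def
    by (simp add: sin_cos_squared_add)
qed


lemma J0: assumes k: "k \<ge> 1" shows "(gg k 0 has_integral pi / (2 * real k)) {0..pi}"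
proof (cases "k = 1")
  case True
  have c: "((\<lambda>x. 1/2) has_integral pi / (2 * real k)) {0..pi}"
    using has_integral_const_real[of "1/2::real" 0 pi] True by simp
  show ?thesis
  proof (rule has_integral_spike_finite[OF _ _ c])
    show "finite {0, pi}" by simp
    fix x assume "x \<in> {0..pi} - {0, pi}"
    then have "sin x > 0" by (intro sin_gt_zero) auto
    then show "gg k 0 x = 1/2" unfolding gg0 Den_alt True by (simp add: field_simps power2_eq_square)
  qed
next
  case False
  then have k1: "k > 1" using k by simp
  define G where "G x = (real k + 1) / (4 * real k) * x - (real k - 1) / (4 * real k) * (x + arctan (sin (2 * x) / (real k - cos (2 * x))))" for x
  have "(gg k 0 has_integral (G pi - G 0)) {0..pi}"
  proof (rule fundamental_theorem_of_calculus)
    fix x :: real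
    have "(G has_real_derivative ((real k + 1) / (4 * real k) * 1 - (real k - 1) / (4 * real k) * (1 + 2 * (real k * cos (2 * x) - 1) / Den k x))) (at x within {0..pi})"
      unfolding G_def
      by (rule DERIV_diff[OF DERIV_cmult[OF DERIV_ident] DERIV_cmult[OF DERIV_add[OF DERIV_ident arctan_deriv[OF k1]]]])
    moreover have "(real k + 1) / (4 * real k) * 1 - (real k - 1) / (4 * real k) * (1 + 2 * (real k * cos (2 * x) - 1) / Den k x) = gg k 0 x"
    proof -
      have "(real k - 1)^2 > 0" using k1 by simp
      then have D: "Den k x > 0" unfolding Den_alt by (simp add: add_pos_nonneg)
      have S: "(sin x)^2 = (1 - cos (2 * x)) / 2" by (simp add: cos_double_sin)
      have gen: "(K + 1) / (4 * K) * 1 - (K - 1) / (4 * K) * (1 + 2 * (K * c - 1) / DD) = (K + 1) * ((1 - c) / 2) / DD"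
        if "DD = K^2 + 1 - 2 * K * c" "DD > 0" "K > 0" for K c DD :: real
      proof -
        have "(K + 1) / (4 * K) * 1 - (K - 1) / (4 * K) * (1 + 2 * (K * c - 1) / DD)
            = ((K + 1) * DD - (K - 1) * (DD + 2 * (K * c - 1))) / (4 * K * DD)"
          using that(2,3) by (simp add: field_simps)
        also have "(K + 1) * DD - (K - 1) * (DD + 2 * (K * c - 1)) = 2 * K * (K + 1) * (1 - c)"
          unfolding that(1) by (simp add: algebra_simps power2_eq_square)
        also have "2 * K * (K + 1) * (1 - c) / (4 * K * DD) = (K + 1) * ((1 - c) / 2) / DD"
          using that(2,3) by (simp add: field_simps)
        finally show ?thesis .
      qed
      show ?thesis unfolding gg0 S by (rule gen) (use D k1 in \<open>auto simp: Den_def\<close>)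
    qed
    ultimately show "(G has_vector_derivative gg k 0 x) (at x within {0..pi})"
      by (simp add: has_real_derivative_iff_has_vector_derivative)
  qed simp
  moreover have "G pi - G 0 = pi / (2 * real k)" unfolding G_def using k1 by (simp add: field_simps)
  ultimately show ?thesis by simp
qed


lemma reflect_int: assumes "(f has_integral i) {0..pi}"
  shows "((\<lambda>x. f (pi - x)) has_integral i) {0..pi}"
proof -
  have "((\<lambda>x. f ((-1) *\<^sub>R x + pi)) has_integral (1 / (\<bar>-1\<bar> ^ DIM(real))) *\<^sub>R i)
        ((\<lambda>x. (1 / (-1)) *\<^sub>R x + -((1 / (-1)) *\<^sub>R pi)) ` cbox 0 pi)"
    by (rule has_integral_affinity) (use assms in auto)
  moreover have "(\<lambda>x::real. (1 / (-1)) *\<^sub>R x + -((1 / (-1)) *\<^sub>R pi)) ` cbox 0 pi = {0..pi}"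
  proof -
    have "(\<lambda>x::real. (1 / (-1)) *\<^sub>R x + -((1 / (-1)) *\<^sub>R pi)) = (\<lambda>x. (-1) * x + pi)" by auto
    moreover have "(\<lambda>x::real. (-1) * x + pi) ` {0..pi} = {0..pi}"
      by (simp add: image_affinity_atLeastAtMost)
    ultimately show ?thesis by simp
  qed
  ultimately show ?thesis by simp
qed

lemma J_even: assumes k: "k \<ge> 1"
  shows "(gg k (2 * m) has_integral (if m = 0 then pi / (2 * real k) else 0)) {0..pi}"
proof (induction m)
  case 0
  then show ?case using J0[OF k] by simp
next
  case (Suc m)
  have eq: "gg k (Suc (Suc (2 * m))) x = real k * gg k (2 * m) x - sin x * sin ((real (2 * m) + 1) * x)" for x
    using gg_rec[OF k, of "2 * m" x] by simp
  have "((\<lambda>x. real k * gg k (2 * m) x - sin x * sin ((real (2 * m) + 1) * x)) has_integral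
        (real k * (if m = 0 then pi / (2 * real k) else 0) - (if 2 * m = 0 then pi / 2 else 0))) {0..pi}"
    by (intro has_integral_diff has_integral_mult_right Suc.IH int_sinsin)
  moreover have "real k * (if m = 0 then pi / (2 * real k) else 0) - (if 2 * m = 0 then pi / 2 else 0) = 0"
    using k by auto
  ultimately show ?case unfolding eq[symmetric] by simp
qed

lemma J_all: assumes k: "k \<ge> 1" and int: "gg k n integrable_on {0..pi}"
  shows "integral {0..pi} (gg k n) = (if n = 0 then pi / (2 * real k) else 0)"
proof (cases "even n")
  case True
  then obtain m where "n = 2 * m" by blast
  then show ?thesis using J_even[OF k, of m] by (simp add: integral_unique)
next
  case False
  have "((\<lambda>x. gg k n (pi - x)) has_integral integral {0..pi} (gg k n)) {0..pi}"
    by (rule reflect_int) (use int in \<open>simp add: has_integral_integral\<close>)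
  moreover have "(\<lambda>x. gg k n (pi - x)) = (\<lambda>x. - gg k n x)" using False
    by (simp add: gg_reflect)
  ultimately have "((\<lambda>x. - gg k n x) has_integral integral {0..pi} (gg k n)) {0..pi}" by simp
  then have "integral {0..pi} (gg k n) = - integral {0..pi} (gg k n)"
    using int by (metis has_integral_integral has_integral_neg has_integral_unique)
  then show ?thesis using False by auto
qed


definition Pi0 :: "nat \<Rightarrow> real \<Rightarrow> real" where
  "Pi0 k t = (real k + 1) / (2 * pi) * sqrt (4 * real k / (real k + 1)^2 - t^2) / (1 - t^2)"

definition gsub :: "nat \<Rightarrow> real \<Rightarrow> real" where "gsub k x = - (aa k * cos x)"

definition FF :: "nat \<Rightarrow> nat \<Rightarrow> real \<Rightarrow> real" where "FF k n t = Pi0 k t * cdr k n t"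

definition cst :: "nat \<Rightarrow> nat \<Rightarrow> real" where "cst k n = (-1)^n * (2 * real k / (pi * sqrt (real k) ^ n))"

lemma aa_nonneg: "aa k \<ge> 0" unfolding aa_def by simp

lemma aa_le1: "aa k \<le> 1"
proof -
  have "(sqrt (real k) - 1)^2 \<ge> 0" by simp
  then have "2 * sqrt (real k) \<le> real k + 1" by (simp add: power2_eq_square algebra_simps)
  then show ?thesis unfolding aa_def by simp
qed

lemma aa_sq: "(aa k)^2 = 4 * real k / (real k + 1)^2"
  unfolding aa_def by (simp add: power_divide power_mult_distrib)

lemma Pi_density_eq: "Pi_density k t = Pi0 k t * indicator {- aa k .. aa k} t"
  unfolding Pi_density_def Pi0_def aa_def by simp

lemma Pi0_nonneg: "\<bar>t\<bar> \<le> aa k \<Longrightarrow> Pi0 k t \<ge> 0"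
proof -
  assume t: "\<bar>t\<bar> \<le> aa k"
  then have "\<bar>t\<bar> \<le> 1" using aa_le1[of k] by linarith
  then have "t^2 \<le> 1" by (simp add: abs_square_le_1)
  moreover have "t^2 \<le> (aa k)^2" using power_mono[OF t abs_ge_zero, of 2] by simp
  ultimately show ?thesis unfolding aa_sq unfolding Pi0_def by (intro divide_nonneg_nonneg mult_nonneg_nonneg) auto
qed

lemma Pi_density_nonneg: "Pi_density k t \<ge> 0"
  unfolding Pi_density_eq using Pi0_nonneg by (auto simp: indicator_def)

lemma gsub_deriv: "(gsub k has_real_derivative aa k * sin x) (at x)"
  unfolding gsub_def by (auto intro!: derivative_eq_intros)

lemma gsub_0: "gsub k 0 = - aa k" and gsub_pi: "gsub k pi = aa k"
  unfolding gsub_def by simp_all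

lemma composite:
  assumes x: "x \<in> {0..pi}"
  shows "Pi0 k (gsub k x) * (aa k * sin x) = (real k + 1) / (2 * pi) * (4 * real k * (sin x)^2 / Den k x)"
proof -
  have s: "sin x \<ge> 0" using x by (auto intro: sin_ge_zero)
  have A: "4 * real k / (real k + 1)^2 - (gsub k x)^2 = (aa k * sin x)^2"
    unfolding gsub_def aa_sq[symmetric]
    by (simp add: power_mult_distrib algebra_simps)
       (metis sin_cos_squared_add mult.right_neutral distrib_left add.commute)
  have B: "sqrt ((aa k * sin x)^2) = aa k * sin x" using s aa_nonneg[of k] by simp
  have C1: "(gsub k x)^2 = 4 * real k / (real k + 1)^2 * (cos x)^2"
    unfolding gsub_def by (simp add: power_mult_distrib aa_sq)
  have C2: "Den k x = (real k + 1)^2 - 4 * real k * (cos x)^2"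
    unfolding Den_def cos_double_cos by (simp add: power2_eq_square algebra_simps)
  have C: "1 - (gsub k x)^2 = Den k x / (real k + 1)^2"
    unfolding C1 C2 by (simp add: field_simps)
  have "Pi0 k (gsub k x) * (aa k * sin x) = (real k + 1) / (2 * pi) * ((aa k)^2 * (sin x)^2 / (Den k x / (real k + 1)^2))"
    unfolding Pi0_def A B C by (simp add: power_mult_distrib power2_eq_square)
  also have "\<dots> = (real k + 1) / (2 * pi) * (4 * real k * (sin x)^2 / Den k x)"
    unfolding aa_sq by (simp add: field_simps)
  finally show ?thesis .
qed

lemma wbound: "k \<ge> 1 \<Longrightarrow> 0 \<le> 4 * real k * (sin x)^2 / Den k x \<and> 4 * real k * (sin x)^2 / Den k x \<le> 1"
proof -
  assume k: "k \<ge> 1"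
  have "4 * real k * (sin x)^2 \<le> Den k x" unfolding Den_alt by simp
  moreover have "Den k x \<ge> 0" by (rule Den_nonneg)
  ultimately show ?thesis by (cases "Den k x = 0") (auto simp: divide_le_eq_1)
qed

lemma FF_theta:
  assumes k: "k \<ge> 1" and x: "x \<in> {0..pi}"
  shows "FF k n (gsub k x) * (aa k * sin x) = cst k n * gg k n x"
proof -
  have T: "(real k + 1) * sqrt (real k) ^ n * sin x * cdr k n (aa k * cos x) = sfun k n x"
    by (rule trig_cdr[OF k])
  have kp: "real k > 0" using k by simp
  have "FF k n (gsub k x) * (aa k * sin x) = (Pi0 k (gsub k x) * (aa k * sin x)) * cdr k n (gsub k x)"
    unfolding FF_def by (simp add: algebra_simps)
  also have "\<dots> = (real k + 1) / (2 * pi) * (4 * real k * (sin x)^2 / Den k x) * ((-1)^n * cdr k n (aa k * cos x))"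
    by (simp only: composite[OF x]) (simp add: gsub_def cdr_neg)
  also have "\<dots> = (-1)^n * (2 * real k / pi) / Den k x * sin x * ((real k + 1) * sin x * cdr k n (aa k * cos x))"
    by (cases "Den k x = 0") (simp_all add: field_simps power2_eq_square)
  also have "(real k + 1) * sin x * cdr k n (aa k * cos x) = sfun k n x / sqrt (real k) ^ n"
    using T kp by (simp add: field_simps)
  also have "(-1)^n * (2 * real k / pi) / Den k x * sin x * (sfun k n x / sqrt (real k) ^ n) = cst k n * gg k n x"
    unfolding cst_def gg_def by (simp add: field_simps)
  finally show ?thesis .
qed


lemma cdr_bound: "\<exists>M. \<forall>t\<in>{-1..1}. \<bar>cdr k n t\<bar> \<le> M"
proof -
  have "bounded (cdr k n ` {-1..1})"
    by (rule compact_imp_bounded[OF compact_continuous_image[OF cdr_cont compact_Icc]])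
  then show ?thesis unfolding bounded_real by auto
qed

lemma Pi0_meas: "Pi0 k \<in> borel_measurable borel"
  unfolding Pi0_def by measurable

lemma cdr_meas: "cdr k n \<in> borel_measurable borel"
  by (rule borel_measurable_continuous_onI[OF cdr_cont])

lemma FF_meas: "FF k n \<in> borel_measurable borel"
  unfolding FF_def using Pi0_meas cdr_meas by measurable

lemma gsub_range: "\<bar>gsub k x\<bar> \<le> aa k"
proof -
  have "\<bar>gsub k x\<bar> = aa k * \<bar>cos x\<bar>" unfolding gsub_def using aa_nonneg[of k] by (simp add: abs_mult)
  also have "\<dots> \<le> aa k * 1" using aa_nonneg[of k] abs_cos_le_one[of x] by (intro mult_left_mono) auto
  finally show ?thesis by simp
qed

lemma FF_int: assumes k: "k \<ge> 1" shows "set_integrable lborel {-aa k..aa k} (FF k n)"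
proof -
  obtain M where M: "\<And>t. t \<in> {-1..1} \<Longrightarrow> \<bar>cdr k n t\<bar> \<le> M" using cdr_bound by blast
  define B where "B = (real k + 1) / (2 * pi) * M"
  have bnd: "\<bar>FF k n (gsub k x)\<bar> * (aa k * sin x) \<le> B" if x: "x \<in> {0..pi}" for x
  proof -
    have s: "sin x \<ge> 0" using x by (auto intro: sin_ge_zero)
    have g1: "gsub k x \<in> {-1..1}" using gsub_range[of k x] aa_le1[of k] by auto
    have w: "0 \<le> 4 * real k * (sin x)^2 / Den k x" "4 * real k * (sin x)^2 / Den k x \<le> 1"
      using wbound[OF k] by auto
    have "\<bar>FF k n (gsub k x)\<bar> * (aa k * sin x) = \<bar>Pi0 k (gsub k x) * (aa k * sin x)\<bar> * \<bar>cdr k n (gsub k x)\<bar>"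
      unfolding FF_def using s aa_nonneg[of k] by (simp add: abs_mult)
    also have "\<dots> = (real k + 1) / (2 * pi) * (4 * real k * (sin x)^2 / Den k x) * \<bar>cdr k n (gsub k x)\<bar>"
      unfolding composite[OF x] using w Den_nonneg[of k x] by (simp add: abs_mult)
    also have "\<dots> \<le> (real k + 1) / (2 * pi) * 1 * M"
      using w M[OF g1] by (intro mult_mono) auto
    finally show ?thesis unfolding B_def by simp
  qed
  have Bnn: "B \<ge> 0" using bnd[of 0] by simp
  have "(\<integral>\<^sup>+ x. ennreal (norm (indicator {-aa k..aa k} x *\<^sub>R FF k n x)) \<partial>lborel)
      = (\<integral>\<^sup>+ x. ennreal (\<bar>FF k n x\<bar> * indicator {gsub k 0..gsub k pi} x) \<partial>lborel)"
    unfolding gsub_0 gsub_pi by (intro nn_integral_cong) (auto simp: indicator_def)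
  also have "\<dots> = (\<integral>\<^sup>+ x. ennreal (\<bar>FF k n (gsub k x)\<bar> * (aa k * sin x) * indicator {0..pi} x) \<partial>lborel)"
  proof (rule nn_integral_substitution)
    show "set_borel_measurable borel {gsub k 0..gsub k pi} (\<lambda>x. \<bar>FF k n x\<bar>)"
      unfolding set_borel_measurable_def using FF_meas by measurable
    show "\<And>x. x \<in> {0..pi} \<Longrightarrow> (gsub k has_real_derivative aa k * sin x) (at x)" by (rule gsub_deriv)
    show "continuous_on {0..pi} (\<lambda>x. aa k * sin x)" by (intro continuous_intros)
    show "\<And>x. x \<in> {0..pi} \<Longrightarrow> 0 \<le> aa k * sin x" using aa_nonneg[of k] by (auto intro!: sin_ge_zero mult_nonneg_nonneg)
  qed simp
  also have "\<dots> \<le> (\<integral>\<^sup>+ x. ennreal B * indicator {0..pi} x \<partial>lborel)"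
    by (intro nn_integral_mono) (auto simp: indicator_def bnd intro!: ennreal_leI)
  also have "\<dots> = ennreal B * emeasure lborel {0..pi}"
    by (rule nn_integral_cmult_indicator) simp
  also have "\<dots> < \<infinity>" by (simp add: ennreal_mult_less_top)
  finally have fin: "(\<integral>\<^sup>+ x. ennreal (norm (indicator {-aa k..aa k} x *\<^sub>R FF k n x)) \<partial>lborel) < \<infinity>" .
  show ?thesis unfolding set_integrable_def
    by (rule integrableI_bounded[OF _ fin]) (use FF_meas in measurable)
qed


lemma Pi_density_meas: "Pi_density k \<in> borel_measurable borel"
  unfolding Pi_density_eq[abs_def] using Pi0_meas by measurable

lemma cst_nz: "k \<ge> 1 \<Longrightarrow> cst k n \<noteq> 0"
  unfolding cst_def by simp

lemma L_val: assumes k: "k \<ge> 1"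
  shows "(LINT t|Pi_measure k. cdr k n t) = (if n = 0 then 1 else 0)"
proof -
  have sub_int: "set_integrable lborel {gsub k 0..gsub k pi} (FF k n)"
    unfolding gsub_0 gsub_pi by (rule FF_int[OF k])
  have d: "\<And>x. x \<in> {0..pi} \<Longrightarrow> (gsub k has_real_derivative aa k * sin x) (at x)" by (rule gsub_deriv)
  have c: "continuous_on {0..pi} (\<lambda>x. aa k * sin x)" by (intro continuous_intros)
  have nn: "\<And>x. x \<in> {0..pi} \<Longrightarrow> 0 \<le> aa k * sin x"
    using aa_nonneg[of k] by (auto intro!: sin_ge_zero mult_nonneg_nonneg)
  note S = integral_substitution[OF sub_int d c nn, simplified]
  have gi: "set_integrable lborel {0..pi} (gg k n)"
  proof -
    have "set_integrable lborel {0..pi} (\<lambda>x. (1 / cst k n) * (FF k n (gsub k x) * (aa k * sin x)))"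
      by (rule set_integrable_mult_right) (rule S(1))
    moreover have "(\<lambda>x. indicator {0..pi} x *\<^sub>R ((1 / cst k n) * (FF k n (gsub k x) * (aa k * sin x))))
        = (\<lambda>x. indicator {0..pi} x *\<^sub>R gg k n x)"
      by (auto simp: indicator_def FF_theta[OF k] cst_nz[OF k])
    ultimately show ?thesis unfolding set_integrable_def by simp
  qed
  have "(LINT t|Pi_measure k. cdr k n t) = (LINT t|lborel. Pi_density k t *\<^sub>R cdr k n t)"
    unfolding Pi_measure_def
    by (rule integral_density) (auto simp: Pi_density_nonneg intro: Pi_density_meas cdr_meas)
  also have "\<dots> = (LINT t|lborel. FF k n t * indicator {gsub k 0..gsub k pi} t)"
    unfolding gsub_0 gsub_pi Pi_density_eq FF_def by (intro Bochner_Integration.integral_cong) auto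
  also have "\<dots> = (LINT x|lborel. FF k n (gsub k x) * (aa k * sin x) * indicator {0..pi} x)"
    by (rule S(2))
  also have "\<dots> = (LINT x|lborel. cst k n * (indicator {0..pi} x *\<^sub>R gg k n x))"
    by (intro Bochner_Integration.integral_cong) (auto simp: indicator_def FF_theta[OF k])
  also have "\<dots> = cst k n * (LINT x:{0..pi}|lborel. gg k n x)"
    unfolding set_lebesgue_integral_def by simp
  also have "\<dots> = cst k n * integral {0..pi} (gg k n)"
    using set_borel_integral_eq_integral(2)[OF gi] by simp
  also have "\<dots> = cst k n * (if n = 0 then pi / (2 * real k) else 0)"
    using J_all[OF k set_borel_integral_eq_integral(1)[OF gi]] by simp
  also have "\<dots> = (if n = 0 then 1 else 0)"
    unfolding cst_def using k by simp
  finally show ?thesis .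
qed



lemma has_sum_sum_fin:
  fixes f :: "'i \<Rightarrow> 'a \<Rightarrow> complex"
  assumes "finite I" "\<And>i. i \<in> I \<Longrightarrow> (f i has_sum s i) A"
  shows "((\<lambda>x. \<Sum>i\<in>I. f i x) has_sum (\<Sum>i\<in>I. s i)) A"
  using assms
proof (induction I rule: finite_induct)
  case empty
  then show ?case by simp
next
  case (insert j I)
  have "((\<lambda>x. f j x + (\<Sum>i\<in>I. f i x)) has_sum (s j + (\<Sum>i\<in>I. s i))) A"
    using insert by (intro has_sum_add) auto
  then show ?case using insert by simp
qed

lemma poly_bound: "\<exists>M. \<forall>t\<in>{-1..1}. norm (poly q (complex_of_real t)) \<le> M"
proof -
  have "continuous_on {-1..1} (\<lambda>t. poly q (complex_of_real t))" by (intro continuous_intros)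
  then have "bounded ((\<lambda>t. poly q (complex_of_real t)) ` {-1..1})"
    by (rule compact_imp_bounded[OF compact_continuous_image[OF _ compact_Icc]])
  then show ?thesis unfolding bounded_iff by auto
qed

lemma Pi_density_int: "k \<ge> 1 \<Longrightarrow> integrable lborel (Pi_density k)"
proof -
  assume k: "k \<ge> 1"
  have "set_integrable lborel {-aa k..aa k} (FF k 0)" by (rule FF_int[OF k])
  moreover have "(\<lambda>x. indicator {-aa k..aa k} x *\<^sub>R FF k 0 x) = Pi_density k"
    by (auto simp: FF_def Pi_density_eq)
  ultimately show ?thesis unfolding set_integrable_def by simp
qed

lemma poly_int: assumes k: "k \<ge> 1"
  shows "integrable (Pi_measure k) (\<lambda>t. poly q (complex_of_real t))"
proof -
  obtain M where M: "\<And>t. t \<in> {-1..1} \<Longrightarrow> norm (poly q (complex_of_real t)) \<le> M" using poly_bound by blast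
  have pm: "(\<lambda>t. poly q (complex_of_real t)) \<in> borel_measurable borel"
    by (rule borel_measurable_continuous_onI) (intro continuous_intros)
  have "integrable lborel (\<lambda>t. Pi_density k t *\<^sub>R poly q (complex_of_real t))"
  proof (rule Bochner_Integration.integrable_bound)
    show "integrable lborel (\<lambda>t. Pi_density k t * M)"
      using Pi_density_int[OF k] by simp
    show "(\<lambda>t. Pi_density k t *\<^sub>R poly q (complex_of_real t)) \<in> borel_measurable lborel"
      using Pi_density_meas pm by measurable
    show "AE x in lborel. norm (Pi_density k x *\<^sub>R poly q (complex_of_real x)) \<le> norm (Pi_density k x * M)"
    proof (rule AE_I2)
      fix x
      show "norm (Pi_density k x *\<^sub>R poly q (complex_of_real x)) \<le> norm (Pi_density k x * M)"
      proof (cases "x \<in> {-aa k..aa k}")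
        case True
        then have "x \<in> {-1..1}" using aa_le1[of k] by auto
        then have "norm (poly q (complex_of_real x)) \<le> M" by (rule M)
        moreover have "Pi_density k x \<ge> 0" by (rule Pi_density_nonneg)
        ultimately show ?thesis
          by (simp add: abs_mult mult_left_mono)
      next
        case False
        then show ?thesis unfolding Pi_density_eq by simp
      qed
    qed
  qed
  then show ?thesis unfolding Pi_measure_def
    by (subst integrable_density) (auto simp: Pi_density_nonneg intro: Pi_density_meas pm)
qed

lemma cd_hat_alt: "cd_hat k \<phi> n = (LINT t|Pi_measure k. complex_of_real (cdr k n t) * poly \<phi> (complex_of_real t))"
  unfolding cd_hat_def cd_poly ..

lemma cd_int: "k \<ge> 1 \<Longrightarrow> integrable (Pi_measure k) (\<lambda>t. complex_of_real (cdr k n t) * poly \<phi> (complex_of_real t))"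
  using poly_int[of k "cartier_dunau k n * \<phi>"] by (simp add: cd_poly)

lemma cd_hat_add: "k \<ge> 1 \<Longrightarrow> cd_hat k (p + q) n = cd_hat k p n + cd_hat k q n"
  unfolding cd_hat_alt by (simp add: distrib_left cd_int)

lemma cd_hat_smult: "cd_hat k (smult c p) n = c * cd_hat k p n"
  unfolding cd_hat_alt by (simp add: mult.left_commute)

lemma cd_hat_0[simp]: "cd_hat k 0 n = 0"
  unfolding cd_hat_alt by simp

lemma cd_hat_1: "k \<ge> 1 \<Longrightarrow> cd_hat k 1 n = (if n = 0 then 1 else 0)"
  unfolding cd_hat_alt using L_val[of k n] by simp

lemma t_cdr: "k \<ge> 1 \<Longrightarrow> n \<ge> 1 \<Longrightarrow> t * cdr k n t = real k / (real k + 1) * cdr k (Suc n) t + 1 / (real k + 1) * cdr k (n - 1) t"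
proof -
  assume k: "k \<ge> 1" and n: "n \<ge> 1"
  then obtain m where m: "n = Suc m" by (cases n) auto
  have "cdr k (Suc n) t = ((real k + 1) * t * cdr k n t - cdr k (n - 1) t) / real k"
    using m by simp
  then have e: "(real k + 1) * (t * cdr k n t) = real k * cdr k (Suc n) t + cdr k (n - 1) t"
    using k by (simp add: field_simps)
  have "t * cdr k n t = (real k * cdr k (Suc n) t + cdr k (n - 1) t) / (real k + 1)"
    using e by (simp add: eq_divide_eq mult.commute)
  also have "\<dots> = real k / (real k + 1) * cdr k (Suc n) t + 1 / (real k + 1) * cdr k (n - 1) t"
    by (simp add: add_divide_distrib)
  finally show ?thesis .
qed

lemma cd_hat_shift: assumes k: "k \<ge> 1"
  shows "cd_hat k (pCons 0 \<phi>) n = (if n = 0 then cd_hat k \<phi> 1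
     else of_real (real k / (real k + 1)) * cd_hat k \<phi> (Suc n) + of_real (1 / (real k + 1)) * cd_hat k \<phi> (n - 1))"
proof (cases "n = 0")
  case True
  then show ?thesis unfolding cd_hat_alt by (simp add: mult.commute)
next
  case False
  have "cd_hat k (pCons 0 \<phi>) n = (LINT t|Pi_measure k.
      of_real (real k / (real k + 1)) * (complex_of_real (cdr k (Suc n) t) * poly \<phi> (complex_of_real t))
      + of_real (1 / (real k + 1)) * (complex_of_real (cdr k (n - 1) t) * poly \<phi> (complex_of_real t)))"
    unfolding cd_hat_alt
  proof (intro Bochner_Integration.integral_cong refl)
    fix t
    have "complex_of_real (cdr k n t) * poly (pCons 0 \<phi>) (complex_of_real t)
        = complex_of_real (t * cdr k n t) * poly \<phi> (complex_of_real t)" by simp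
    also have "\<dots> = complex_of_real (real k / (real k + 1) * cdr k (Suc n) t + 1 / (real k + 1) * cdr k (n - 1) t) * poly \<phi> (complex_of_real t)"
      using t_cdr[OF k, of n t] False by simp
    finally show "complex_of_real (cdr k n t) * poly (pCons 0 \<phi>) (complex_of_real t) =
      of_real (real k / (real k + 1)) * (complex_of_real (cdr k (Suc n) t) * poly \<phi> (complex_of_real t))
      + of_real (1 / (real k + 1)) * (complex_of_real (cdr k (n - 1) t) * poly \<phi> (complex_of_real t))"
      by (simp add: algebra_simps)
  qed
  also have "\<dots> = of_real (real k / (real k + 1)) * cd_hat k \<phi> (Suc n) + of_real (1 / (real k + 1)) * cd_hat k \<phi> (n - 1)"
    unfolding cd_hat_alt using cd_int[OF k] by simp
  finally show ?thesis using False by simp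
qed

lemma cd_hat_t: assumes k: "k \<ge> 1"
  shows "cd_hat k [:0, 1:] n = (if n = 1 then of_real (1 / (real k + 1)) else 0)"
  using cd_hat_shift[OF k, of 1 n] cd_hat_1[OF k] by (auto simp: pCons_one)



lemma K_alt: "x \<in> cayley_V k \<Longrightarrow> y \<in> cayley_V k \<Longrightarrow> T_kernel k \<phi> x y = cd_hat k \<phi> (D x y)"
  unfolding T_kernel_def by (simp add: dist_eq)

lemma K_1: "k \<ge> 1 \<Longrightarrow> x \<in> cayley_V k \<Longrightarrow> y \<in> cayley_V k \<Longrightarrow> T_kernel k 1 x y = (if x = y then 1 else 0)"
  by (simp add: K_alt cd_hat_1 D_eq0)

lemma K_add: "k \<ge> 1 \<Longrightarrow> T_kernel k (p + q) x y = T_kernel k p x y + T_kernel k q x y"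
  unfolding T_kernel_def by (simp add: cd_hat_add)

lemma K_smult: "T_kernel k (smult c p) x y = c * T_kernel k p x y"
  unfolding T_kernel_def by (simp add: cd_hat_smult)

lemma K_0[simp]: "T_kernel k 0 x y = 0"
  unfolding T_kernel_def by simp

lemma K_shift: assumes k: "k \<ge> 1" and x: "x \<in> cayley_V k" and y: "y \<in> cayley_V k"
  shows "T_kernel k (pCons 0 \<phi>) x y = of_real (1 / (real k + 1)) * (\<Sum>w\<in>Nb k x. T_kernel k \<phi> w y)"
proof -
  have NV: "\<And>w. w \<in> Nb k x \<Longrightarrow> w \<in> cayley_V k" unfolding Nb_def by auto
  have "(\<Sum>w\<in>Nb k x. T_kernel k \<phi> w y) = (\<Sum>w\<in>Nb k x. cd_hat k \<phi> (D w y))"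
    using NV y by (intro sum.cong) (auto simp: K_alt)
  also have "\<dots> = (if x = y then of_nat (k + 1) * cd_hat k \<phi> 1 else cd_hat k \<phi> (D x y - 1) + of_nat k * cd_hat k \<phi> (D x y + 1))"
    by (rule sum_Nb[OF x y])
  finally have S: "(\<Sum>w\<in>Nb k x. T_kernel k \<phi> w y) = \<dots>" .
  have kk: "1 + complex_of_nat k \<noteq> 0"
    by (metis add.commute of_nat_Suc of_nat_eq_0_iff nat.distinct(1))
  define c where "c = complex_of_real (1 / (real k + 1))"
  have r: "complex_of_real (real k / (real k + 1)) = c * of_nat k" unfolding c_def by simp
  have r1: "c * of_nat (k + 1) = 1" unfolding c_def
    by (simp add: field_simps) (metis add.commute of_nat_Suc of_nat_eq_0_iff nat.distinct(1))
  show ?thesis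
  proof (cases "x = y")
    case True
    have "T_kernel k (pCons 0 \<phi>) x y = cd_hat k \<phi> 1" using True K_alt[OF x y] cd_hat_shift[OF k] by simp
    also have "\<dots> = c * (of_nat (k + 1) * cd_hat k \<phi> 1)" using r1 by (simp add: mult.assoc[symmetric])
    finally show ?thesis using S True unfolding c_def by simp
  next
    case False
    then have "D x y \<noteq> 0" using D_eq0 by simp
    then have "T_kernel k (pCons 0 \<phi>) x y = (c * of_nat k) * cd_hat k \<phi> (Suc (D x y)) + c * cd_hat k \<phi> (D x y - 1)"
      using K_alt[OF x y] cd_hat_shift[OF k] r unfolding c_def by simp
    also have "\<dots> = c * (cd_hat k \<phi> (D x y - 1) + of_nat k * cd_hat k \<phi> (D x y + 1))"
      by (simp add: algebra_simps)
    finally show ?thesis using S False unfolding c_def by simp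
  qed
qed

lemma K_t: assumes k: "k \<ge> 1" and x: "x \<in> cayley_V k" and z: "z \<in> cayley_V k"
  shows "T_kernel k [:0, 1:] x z = (if z \<in> Nb k x then of_real (1 / (real k + 1)) else 0)"
  using z by (simp add: K_alt[OF x z] cd_hat_t[OF k] Nb_def)

lemma main_has_sum:
  assumes k: "k \<ge> 1"
  shows "\<forall>\<phi>2 x y. x \<in> cayley_V k \<longrightarrow> y \<in> cayley_V k \<longrightarrow>
     ((\<lambda>z. T_kernel k \<phi>1 x z * T_kernel k \<phi>2 z y) has_sum T_kernel k (\<phi>1 * \<phi>2) x y) (cayley_V k)"
proof (induction \<phi>1 rule: pCons_induct)
  case 0
  then show ?case by simp
next
  case (pCons a p)
  show ?case
  proof (intro allI impI)
    fix \<phi>2 x y assume x: "x \<in> cayley_V k" and y: "y \<in> cayley_V k"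
    have NV: "\<And>w. w \<in> Nb k x \<Longrightarrow> w \<in> cayley_V k" unfolding Nb_def by auto
    have dec: "pCons a p = smult a 1 + pCons 0 p" by simp
    have summand: "T_kernel k (pCons a p) x z * T_kernel k \<phi>2 z y =
        a * ((if x = z then 1 else 0) * T_kernel k \<phi>2 z y) +
        of_real (1 / (real k + 1)) * (\<Sum>w\<in>Nb k x. T_kernel k p w z * T_kernel k \<phi>2 z y)"
      if z: "z \<in> cayley_V k" for z
    proof -
      have "T_kernel k (pCons a p) x z = a * (if x = z then 1 else 0) + of_real (1 / (real k + 1)) * (\<Sum>w\<in>Nb k x. T_kernel k p w z)"
        by (subst dec, simp only: K_add[OF k] K_smult K_1[OF k x z] K_shift[OF k x z])
      then show ?thesis by (simp only: distrib_right sum_distrib_right mult.assoc)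
    qed
    have h1: "((\<lambda>z. a * ((if x = z then 1 else 0) * T_kernel k \<phi>2 z y)) has_sum (a * T_kernel k \<phi>2 x y)) (cayley_V k)"
      by (rule has_sum_finite_neutralI[of "{x}"]) (use x in auto)
    have h2: "((\<lambda>z. \<Sum>w\<in>Nb k x. T_kernel k p w z * T_kernel k \<phi>2 z y) has_sum (\<Sum>w\<in>Nb k x. T_kernel k (p * \<phi>2) w y)) (cayley_V k)"
      by (rule has_sum_sum_fin) (use Nb_finite[OF x] NV pCons.IH y in auto)
    have h3: "((\<lambda>z. a * ((if x = z then 1 else 0) * T_kernel k \<phi>2 z y) +
        of_real (1 / (real k + 1)) * (\<Sum>w\<in>Nb k x. T_kernel k p w z * T_kernel k \<phi>2 z y)) has_sum
        (a * T_kernel k \<phi>2 x y + of_real (1 / (real k + 1)) * (\<Sum>w\<in>Nb k x. T_kernel k (p * \<phi>2) w y))) (cayley_V k)"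
      by (rule has_sum_add[OF h1 has_sum_cmult_right[OF h2]])
    have "((\<lambda>z. T_kernel k (pCons a p) x z * T_kernel k \<phi>2 z y) has_sum
        (a * T_kernel k \<phi>2 x y + of_real (1 / (real k + 1)) * (\<Sum>w\<in>Nb k x. T_kernel k (p * \<phi>2) w y))) (cayley_V k)"
      using h3 summand by (subst has_sum_cong) auto
    moreover have "a * T_kernel k \<phi>2 x y + of_real (1 / (real k + 1)) * (\<Sum>w\<in>Nb k x. T_kernel k (p * \<phi>2) w y)
        = T_kernel k (pCons a p * \<phi>2) x y"
      by (simp add: mult_pCons_left K_add[OF k] K_smult K_shift[OF k x y])
    ultimately show "((\<lambda>z. T_kernel k (pCons a p) x z * T_kernel k \<phi>2 z y) has_sum T_kernel k (pCons a p * \<phi>2) x y) (cayley_V k)"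
      by simp
  qed
qed

theorem lemma4p1:
  fixes \<kappa> :: nat and \<phi>1 \<phi>2 :: "complex poly"
  assumes "\<kappa> \<ge> 1"
  shows "(\<forall>x\<in>cayley_V \<kappa>. \<forall>y\<in>cayley_V \<kappa>.
           ((\<lambda>z. T_kernel \<kappa> \<phi>1 x z * T_kernel \<kappa> \<phi>2 z y) has_sum T_kernel \<kappa> (\<phi>1 * \<phi>2) x y)
             (cayley_V \<kappa>))
       \<and> (\<forall>v :: nat \<Rightarrow> nat list.
            (\<forall>k. v k \<in> cayley_V \<kappa>) \<and>
            (\<forall>k n. cayley_dist \<kappa> (v k) (v n) = (if k \<le> n then n - k else k - n)) \<longrightarrow>
            (\<forall>n. cd_hat \<kappa> (\<phi>1 * \<phi>2) n = tree_conv \<kappa> v (cd_hat \<kappa> \<phi>1) (cd_hat \<kappa> \<phi>2) n))"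
proof (intro conjI ballI allI impI)
  fix x y assume "x \<in> cayley_V \<kappa>" "y \<in> cayley_V \<kappa>"
  then show "((\<lambda>z. T_kernel \<kappa> \<phi>1 x z * T_kernel \<kappa> \<phi>2 z y) has_sum T_kernel \<kappa> (\<phi>1 * \<phi>2) x y) (cayley_V \<kappa>)"
    using main_has_sum[OF assms] by blast
next
  fix v :: "nat \<Rightarrow> nat list" and n
  assume v: "(\<forall>k. v k \<in> cayley_V \<kappa>) \<and> (\<forall>k n. cayley_dist \<kappa> (v k) (v n) = (if k \<le> n then n - k else k - n))"
  have hs: "((\<lambda>z. T_kernel \<kappa> \<phi>1 (v 0) z * T_kernel \<kappa> \<phi>2 z (v n)) has_sum T_kernel \<kappa> (\<phi>1 * \<phi>2) (v 0) (v n)) (cayley_V \<kappa>)"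
    using main_has_sum[OF assms] v by blast
  have "tree_conv \<kappa> v (cd_hat \<kappa> \<phi>1) (cd_hat \<kappa> \<phi>2) n = T_kernel \<kappa> (\<phi>1 * \<phi>2) (v 0) (v n)"
    unfolding tree_conv_def using infsumI[OF hs] by (simp add: T_kernel_def)
  also have "\<dots> = cd_hat \<kappa> (\<phi>1 * \<phi>2) n"
    unfolding T_kernel_def using v by simp
  finally show "cd_hat \<kappa> (\<phi>1 * \<phi>2) n = tree_conv \<kappa> v (cd_hat \<kappa> \<phi>1) (cd_hat \<kappa> \<phi>2) n" by simp
qed


end
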